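(* Let $\mathfrak W=\{A_0,\dots,A_p\}$ be a finite collection of finite subsets of $\mathbb N$, let $e,k,y\in\mathbb N$, let $\sigma$ be a finite string of natural numbers, and put $m=(y-1)\left(\prod_{j\le p}|A_j|\right)+1$. Then at least one of the following holds: (1) there exist a selection $S$ of $\mathfrak W$ and a finite tree $F\subseteq\mathbb N^{<\omega}$ such that $F$ is $y$-branching below $\sigma$, every terminal node of $F$ has length $|\sigma|+k$, and $F$ accepts $S$ for $e$; (2) there are fewer than $m$ strings $\tau$ with $\tau^-=\sigma$ (pairwise distinct, i.e. siblings immediately below $\sigma$) each of which is $i$-bad relative to $\langle\mathfrak W,m,e\rangle$ for some $i\le k$.
   Context: Strings are finite sequences of natural numbers, viewed as functions on an initial segment of $\mathbb N$; $|\sigma|$ is the length, and for $|\sigma|>0$, $\sigma^-=\sigma\restriction(|\sigma|-1)$. Two strings $\tau_1\ne\tau_2$ with $\tau_1^-=\tau_2^-=\sigma$ are siblings immediately below $\sigma$. For an oracle program (Turing functional) with index $e$ and a string $\sigma$, $W^\sigma_e$ is the set of $x$ such that the oracle program $e$ with any oracle extending $\sigma$, using only oracle queries below $|\sigma|$ (use $\le|\sigma|$), halts on input $x$. For a finite $S\subseteq\mathbb N$, $\sigma$ accepts $S$ for $e$ if $S\subseteq W^\sigma_e$; a finite tree $F$ accepts $S$ for $e$ if every terminal node of $F$ accepts $S$ for $e$. A selection of a finite collection of sets $\mathfrak W$ is a set containing exactly one element from each member of $\mathfrak W$. A finite tree $F$ is $y$-branching below $\sigma$ (of depth $k$) if every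 node of $F$ is a prefix or extension of $\sigma$, every terminal node has length $|\sigma|+k$, and every node of $F$ extending $\sigma$ (including $\sigma$) of length less than $|\sigma|+k$ has at least $y$ distinct immediate extensions in $F$. Badness is defined inductively: $\sigma$ is 1-bad relative to $\langle\mathfrak W,m,e\rangle$ if $\sigma$ accepts some selection of $\mathfrak W$ for $e$; $\sigma$ is $(n+1)$-bad relative to $\langle\mathfrak W,m,e\rangle$ if $\sigma$ has $m$ distinct extensions of length $|\sigma|+1$ that are $n$-bad relative to $\langle\mathfrak W,m,e\rangle$. *)

theory Defs
  imports Main "HOL-Library.Sublist"
begin

text \<open>An oracle computation model is a parameter
  Phi :: nat => (nat => nat) => nat => nat option, where Phi e f x = Some u
  means: oracle program e with oracle f halts on input x, and u is the use
  (all oracle queries are below u); None means divergence.\<close>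

type_synonym oracle_comp = "nat \<Rightarrow> (nat \<Rightarrow> nat) \<Rightarrow> nat \<Rightarrow> nat option"

definition oracle_extends :: "(nat \<Rightarrow> nat) \<Rightarrow> nat list \<Rightarrow> bool" where
  "oracle_extends f \<sigma> \<longleftrightarrow> (\<forall>i<length \<sigma>. f i = \<sigma> ! i)"

definition Wset :: "oracle_comp \<Rightarrow> nat \<Rightarrow> nat list \<Rightarrow> nat set" where
  "Wset Phi e \<sigma> = {x. \<forall>f. oracle_extends f \<sigma> \<longrightarrow>
      (\<exists>u. Phi e f x = Some u \<and> u \<le> length \<sigma>)}"

definition accepts :: "oracle_comp \<Rightarrow> nat \<Rightarrow> nat list \<Rightarrow> nat set \<Rightarrow> bool" where
  "accepts Phi e \<sigma> S \<longleftrightarrow> S \<subseteq> Wset Phi e \<sigma>"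

text \<open>The collection W = {A_0,...,A_p} is given as an indexed family A j, j \<le> p.
  A selection picks one element a_j from each A_j.\<close>
definition is_selection :: "(nat \<Rightarrow> nat set) \<Rightarrow> nat \<Rightarrow> nat set \<Rightarrow> bool" where
  "is_selection A p S \<longleftrightarrow> (\<exists>a. (\<forall>j\<le>p. a j \<in> A j) \<and> S = a ` {..p})"

definition is_tree :: "nat list set \<Rightarrow> bool" where
  "is_tree F \<longleftrightarrow> F \<noteq> {} \<and> (\<forall>\<tau>\<in>F. \<forall>\<rho>. prefix \<rho> \<tau> \<longrightarrow> \<rho> \<in> F)"

definition terminal :: "nat list set \<Rightarrow> nat list \<Rightarrow> bool" where
  "terminal F \<tau> \<longleftrightarrow> \<tau> \<in> F \<and> \<not> (\<exists>\<rho>\<in>F. strict_prefix \<tau> \<rho>)"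

definition tree_accepts :: "oracle_comp \<Rightarrow> nat \<Rightarrow> nat list set \<Rightarrow> nat set \<Rightarrow> bool" where
  "tree_accepts Phi e F S \<longleftrightarrow> (\<forall>\<tau>. terminal F \<tau> \<longrightarrow> accepts Phi e \<tau> S)"

definition y_branching :: "nat list set \<Rightarrow> nat \<Rightarrow> nat list \<Rightarrow> nat \<Rightarrow> bool" where
  "y_branching F y \<sigma> k \<longleftrightarrow>
     \<sigma> \<in> F \<and>
     (\<forall>\<tau>\<in>F. prefix \<tau> \<sigma> \<or> prefix \<sigma> \<tau>) \<and>
     (\<forall>\<tau>. terminal F \<tau> \<longrightarrow> length \<tau> = length \<sigma> + k) \<and>
     (\<forall>\<tau>\<in>F. prefix \<sigma> \<tau> \<and> length \<tau> < length \<sigma> + k \<longrightarrow>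
        y \<le> card {\<rho>\<in>F. prefix \<tau> \<rho> \<and> length \<rho> = length \<tau> + 1})"

fun bad :: "oracle_comp \<Rightarrow> (nat \<Rightarrow> nat set) \<Rightarrow> nat \<Rightarrow> nat \<Rightarrow> nat \<Rightarrow> nat \<Rightarrow> nat list \<Rightarrow> bool" where
  "bad Phi A p m e 0 \<sigma> = False"
| "bad Phi A p m e (Suc 0) \<sigma> = (\<exists>S. is_selection A p S \<and> accepts Phi e \<sigma> S)"
| "bad Phi A p m e (Suc (Suc n)) \<sigma> =
     (\<exists>T. finite T \<and> m \<le> card T \<and>
        (\<forall>\<tau>\<in>T. prefix \<sigma> \<tau> \<and> length \<tau> = length \<sigma> + 1 \<and> bad Phi A p m e (Suc n) \<tau>))"

end

theory Submission
  imports Defs "HOL-Library.FuncSet"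
begin

lemma Wset_mono: "prefix \<sigma> \<tau> \<Longrightarrow> Wset Phi e \<sigma> \<subseteq> Wset Phi e \<tau>"
proof
  fix x assume p: "prefix \<sigma> \<tau>" and x: "x \<in> Wset Phi e \<sigma>"
  have len: "length \<sigma> \<le> length \<tau>" using p by (simp add: prefix_length_le)
  show "x \<in> Wset Phi e \<tau>"
    unfolding Wset_def
  proof (intro CollectI allI impI)
    fix f assume f: "oracle_extends f \<tau>"
    have "oracle_extends f \<sigma>" using f p unfolding oracle_extends_def
      by (metis len order_less_le_trans prefix_def nth_append)
    then obtain u where "Phi e f x = Some u" "u \<le> length \<sigma>" using x unfolding Wset_def by blast
    then show "\<exists>u. Phi e f x = Some u \<and> u \<le> length \<tau>" using len by auto
  qed
qed

lemma accepts_mono: "prefix \<sigma> \<tau> \<Longrightarrow> accepts Phi e \<sigma> S \<Longrightarrow> accepts Phi e \<tau> S"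
  unfolding accepts_def using Wset_mono by blast

lemma bad_step: "bad Phi A p m e (Suc n) \<tau> \<Longrightarrow> bad Phi A p m e (Suc (Suc n)) \<tau>"
proof (induction n arbitrary: \<tau>)
  case 0
  then obtain S where S: "is_selection A p S" "accepts Phi e \<tau> S" by auto
  let ?T = "(\<lambda>i. \<tau> @ [i]) ` {..<m}"
  have "card ?T = m" by (subst card_image) (auto simp: inj_on_def)
  moreover have "\<forall>t\<in>?T. prefix \<tau> t \<and> length t = length \<tau> + 1 \<and> bad Phi A p m e (Suc 0) t"
    using S accepts_mono[of \<tau> _ Phi e S] by auto
  ultimately show ?case by (intro bad.simps(3)[THEN iffD2] exI[of _ ?T]) auto
next
  case (Suc n)
  from Suc.prems obtain T where T: "finite T" "m \<le> card T"
    "\<forall>t\<in>T. prefix \<tau> t \<and> length t = length \<tau> + 1 \<and> bad Phi A p m e (Suc n) t" by auto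
  then have "\<forall>t\<in>T. prefix \<tau> t \<and> length t = length \<tau> + 1 \<and> bad Phi A p m e (Suc (Suc n)) t"
    using Suc.IH by blast
  with T show ?case by auto
qed

lemma bad_mono: "1 \<le> i \<Longrightarrow> i \<le> k \<Longrightarrow> bad Phi A p m e i \<tau> \<Longrightarrow> bad Phi A p m e k \<tau>"
proof (induction k)
  case 0 then show ?case by simp
next
  case (Suc k)
  show ?case
  proof (cases "i = Suc k")
    case True then show ?thesis using Suc by simp
  next
    case False
    then have "bad Phi A p m e k \<tau>" using Suc by auto
    moreover have "k \<ge> 1" using Suc False by auto
    ultimately show ?thesis using bad_step[of Phi A p m e "k - 1" \<tau>] by simp
  qed
qed

lemma sel_card:
  assumes finA: "\<forall>j\<le>p. finite (A j)"
  shows "finite {S. is_selection A p S} \<and> card {S. is_selection A p S} \<le> (\<Prod>j\<le>p. card (A j))"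
proof -
  have eq: "{S. is_selection A p S} = (\<lambda>a. a ` {..p}) ` (PiE {..p} A)"
  proof (intro set_eqI iffI)
    fix S assume "S \<in> {S. is_selection A p S}"
    then obtain a where a: "\<forall>j\<le>p. a j \<in> A j" "S = a ` {..p}" unfolding is_selection_def by auto
    have "restrict a {..p} \<in> PiE {..p} A" using a by auto
    moreover have "S = (restrict a {..p}) ` {..p}" using a by auto
    ultimately show "S \<in> (\<lambda>a. a ` {..p}) ` (PiE {..p} A)" by blast
  next
    fix S assume "S \<in> (\<lambda>a. a ` {..p}) ` (PiE {..p} A)"
    then obtain a where "a \<in> PiE {..p} A" "S = a ` {..p}" by auto
    then show "S \<in> {S. is_selection A p S}" unfolding is_selection_def by (auto simp: PiE_iff)
  qed
  have fin: "finite (PiE {..p} A)" using finA by (intro finite_PiE) auto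
  have "card (PiE {..p} A) = (\<Prod>j\<le>p. card (A j))" by (simp add: card_PiE)
  then show ?thesis unfolding eq using fin card_image_le by (metis finite_imageI)
qed

lemma pigeon:
  assumes "finite T" "(y - 1) * N + 1 \<le> card T" "f ` T \<subseteq> B" "finite B" "card B \<le> N"
  shows "\<exists>b\<in>B. y \<le> card {t\<in>T. f t = b}"
proof (rule ccontr)
  assume "\<not> ?thesis"
  then have lt: "\<forall>b\<in>B. card {t\<in>T. f t = b} \<le> y - 1" by auto
  have "T = (\<Union>b\<in>B. {t\<in>T. f t = b})" using assms(3) by auto
  then have "card T \<le> (\<Sum>b\<in>B. card {t\<in>T. f t = b})" using card_UN_le[OF assms(4)] by metis
  also have "\<dots> \<le> (\<Sum>b\<in>B. y - 1)" using lt by (intro sum_mono) auto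
  also have "\<dots> = card B * (y - 1)" by simp
  also have "\<dots> \<le> N * (y - 1)" using assms(5) by simp
  finally show False using assms(2) by (simp add: mult.commute)
qed

definition good where
  "good y Phi e F \<tau> n S \<longleftrightarrow> finite F \<and> \<tau> \<in> F \<and> (\<forall>\<rho>\<in>F. prefix \<tau> \<rho> \<and> length \<rho> \<le> length \<tau> + n)
    \<and> (\<forall>\<rho> x. x \<in> F \<longrightarrow> prefix \<tau> \<rho> \<longrightarrow> prefix \<rho> x \<longrightarrow> \<rho> \<in> F)
    \<and> (\<forall>\<rho>\<in>F. length \<rho> < length \<tau> + n \<longrightarrow> y \<le> card {\<rho>'\<in>F. prefix \<rho> \<rho>' \<and> length \<rho>' = length \<rho> + 1})
    \<and> (\<forall>\<rho>\<in>F. length \<rho> = length \<tau> + n \<longrightarrow> accepts Phi e \<rho> S)"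



lemma good_D:
  assumes "good y Phi e F \<tau> n S"
  shows "finite F" "\<tau> \<in> F" "\<And>\<rho>. \<rho> \<in> F \<Longrightarrow> prefix \<tau> \<rho>"
    "\<And>\<rho>. \<rho> \<in> F \<Longrightarrow> length \<rho> \<le> length \<tau> + n"
    "\<And>\<rho> x. x \<in> F \<Longrightarrow> prefix \<tau> \<rho> \<Longrightarrow> prefix \<rho> x \<Longrightarrow> \<rho> \<in> F"
    "\<And>\<rho>. \<rho> \<in> F \<Longrightarrow> length \<rho> < length \<tau> + n \<Longrightarrow> y \<le> card {\<rho>'\<in>F. prefix \<rho> \<rho>' \<and> length \<rho>' = length \<rho> + 1}"
    "\<And>\<rho>. \<rho> \<in> F \<Longrightarrow> length \<rho> = length \<tau> + n \<Longrightarrow> accepts Phi e \<rho> S"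
  using assms unfolding good_def by blast+

lemma core:
  assumes finA: "\<forall>j\<le>p. finite (A j)"
    and mdef: "m = (y - 1) * (\<Prod>j\<le>p. card (A j)) + 1"
  shows "bad Phi A p m e (Suc n) \<tau> \<Longrightarrow> \<exists>S. is_selection A p S \<and> (\<exists>F. good y Phi e F \<tau> n S)"
proof (induction n arbitrary: \<tau>)
  case 0
  then obtain S where S: "is_selection A p S" "accepts Phi e \<tau> S" by auto
  have "good y Phi e {\<tau>} \<tau> 0 S" using S unfolding good_def
    by (auto intro: prefix_order.antisym)
  then show ?case using S by blast
next
  case (Suc n)
  from Suc.prems obtain T where T: "finite T" "m \<le> card T"
    "\<forall>t\<in>T. prefix \<tau> t \<and> length t = length \<tau> + 1 \<and> bad Phi A p m e (Suc n) t" by auto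
  have ex1: "\<forall>t\<in>T. \<exists>S. is_selection A p S \<and> (\<exists>F. good y Phi e F t n S)"
  proof
    fix t assume "t \<in> T"
    then have "bad Phi A p m e (Suc n) t" using T(3) by blast
    then show "\<exists>S. is_selection A p S \<and> (\<exists>F. good y Phi e F t n S)" by (rule Suc.IH)
  qed
  obtain Sf where Sf: "\<forall>t\<in>T. is_selection A p (Sf t) \<and> (\<exists>F. good y Phi e F t n (Sf t))"
    using bchoice[OF ex1] by (elim exE) (rule that)
  have ex2: "\<forall>t\<in>T. \<exists>F. good y Phi e F t n (Sf t)" using Sf by blast
  obtain Ff where Ff: "\<forall>t\<in>T. good y Phi e (Ff t) t n (Sf t)"
    using bchoice[OF ex2] by (elim exE) (rule that)
  have SF: "\<forall>t\<in>T. is_selection A p (Sf t) \<and> good y Phi e (Ff t) t n (Sf t)"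
    using Sf Ff by blast
  define B where "B = {S. is_selection A p S}"
  have B: "finite B" "card B \<le> (\<Prod>j\<le>p. card (A j))" using sel_card[OF finA] B_def by auto
  have "Sf ` T \<subseteq> B" unfolding B_def image_subset_iff mem_Collect_eq using SF by simp
  then obtain S where S: "S \<in> B" "y \<le> card {t\<in>T. Sf t = S}"
    using pigeon[OF T(1), of y "\<Prod>j\<le>p. card (A j)" Sf B, OF _ \<open>Sf ` T \<subseteq> B\<close> B] T(2) mdef by blast
  obtain T' where T': "T' \<subseteq> {t\<in>T. Sf t = S}" "card T' = y"
    using obtain_subset_with_card_n[OF S(2)] by blast
  have "T' \<subseteq> T" using T'(1) by blast
  then have finT': "finite T'" using T(1) finite_subset by blast
  define F where "F = insert \<tau> (\<Union>t\<in>T'. Ff t)"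
  have gt: "\<And>t. t \<in> T' \<Longrightarrow> good y Phi e (Ff t) t n S \<and> prefix \<tau> t \<and> length t = length \<tau> + 1"
  proof -
    fix t assume t: "t \<in> T'"
    then have "t \<in> T" "Sf t = S" using T'(1) by blast+
    then show "good y Phi e (Ff t) t n S \<and> prefix \<tau> t \<and> length t = length \<tau> + 1"
      using SF T(3) by metis
  qed
  have "good y Phi e F \<tau> (Suc n) S"
    unfolding good_def
  proof (intro conjI)
    show "finite F" unfolding F_def using finT' gt good_D(1) by blast
    show "\<tau> \<in> F" unfolding F_def by simp
    show "\<forall>\<rho>\<in>F. prefix \<tau> \<rho> \<and> length \<rho> \<le> length \<tau> + Suc n"
    proof
      fix \<rho> assume r: "\<rho> \<in> F"
      show "prefix \<tau> \<rho> \<and> length \<rho> \<le> length \<tau> + Suc n"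
      proof (cases "\<rho> = \<tau>")
        case False
        then obtain t where t: "t \<in> T'" "\<rho> \<in> Ff t" using r F_def by auto
        have g: "good y Phi e (Ff t) t n S" "prefix \<tau> t" "length t = length \<tau> + 1" using gt t by auto
        then have "prefix t \<rho>" "length \<rho> \<le> length t + n" using t good_D(3,4)[OF g(1)] by auto
        then show ?thesis using g by (auto intro: prefix_order.trans)
      qed simp
    qed
    show "\<forall>\<rho> x. x \<in> F \<longrightarrow> prefix \<tau> \<rho> \<longrightarrow> prefix \<rho> x \<longrightarrow> \<rho> \<in> F"
    proof (intro allI impI)
      fix \<rho> x assume x: "x \<in> F" and p1: "prefix \<tau> \<rho>" and p2: "prefix \<rho> x"
      show "\<rho> \<in> F"
      proof (cases "x = \<tau>")
        case True then show ?thesis using p1 p2 F_def by (auto intro: prefix_order.antisym)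
      next
        case False
        then obtain t where t: "t \<in> T'" "x \<in> Ff t" using x F_def by auto
        have g: "good y Phi e (Ff t) t n S" "prefix \<tau> t" "length t = length \<tau> + 1" using gt t by auto
        have ptx: "prefix t x" using good_D(3)[OF g(1)] t by auto
        show ?thesis
        proof (cases "length \<rho> = length \<tau>")
          case True
          then have "\<rho> = \<tau>" using p1 by (metis prefix_order.le_less prefix_length_less less_irrefl)
          then show ?thesis using F_def by simp
        next
          case False
          then have "length t \<le> length \<rho>" using g(3) p1 prefix_length_le by fastforce
          then have "prefix t \<rho>" using ptx p2 by (metis prefix_length_prefix)
          then have "\<rho> \<in> Ff t" using good_D(5)[OF g(1) t(2) _ p2] by blast
          then show ?thesis using t F_def by auto
        qed
      qed
    qed
    show "\<forall>\<rho>\<in>F. length \<rho> < length \<tau> + Suc n \<longrightarrow>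
        y \<le> card {\<rho>' \<in> F. prefix \<rho> \<rho>' \<and> length \<rho>' = length \<rho> + 1}"
    proof (intro ballI impI)
      fix \<rho> assume r: "\<rho> \<in> F" and l: "length \<rho> < length \<tau> + Suc n"
      have finF: "finite F" unfolding F_def using finT' gt good_D(1) by blast
      show "y \<le> card {\<rho>' \<in> F. prefix \<rho> \<rho>' \<and> length \<rho>' = length \<rho> + 1}"
      proof (cases "\<rho> = \<tau>")
        case True
        have "T' \<subseteq> {\<rho>' \<in> F. prefix \<rho> \<rho>' \<and> length \<rho>' = length \<rho> + 1}"
        proof
          fix t assume t: "t \<in> T'"
          have "t \<in> Ff t" using gt[OF t] good_D(2) by blast
          then have "t \<in> F" using t F_def by blast
          then show "t \<in> {\<rho>' \<in> F. prefix \<rho> \<rho>' \<and> length \<rho>' = length \<rho> + 1}"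
            using gt[OF t] True by simp
        qed
        moreover have "finite {\<rho>' \<in> F. prefix \<rho> \<rho>' \<and> length \<rho>' = length \<rho> + 1}"
          using finF by simp
        ultimately show ?thesis using T'(2) card_mono by metis
      next
        case False
        then obtain t where t: "t \<in> T'" "\<rho> \<in> Ff t" using r F_def by auto
        have g: "good y Phi e (Ff t) t n S" "length t = length \<tau> + 1" using gt t by auto
        then have "y \<le> card {\<rho>' \<in> Ff t. prefix \<rho> \<rho>' \<and> length \<rho>' = length \<rho> + 1}"
          using t l good_D(6)[OF g(1)] by auto
        also have "\<dots> \<le> card {\<rho>' \<in> F. prefix \<rho> \<rho>' \<and> length \<rho>' = length \<rho> + 1}"
        proof (rule card_mono)
          show "finite {\<rho>' \<in> F. prefix \<rho> \<rho>' \<and> length \<rho>' = length \<rho> + 1}" using finF by simp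
          show "{\<rho>' \<in> Ff t. prefix \<rho> \<rho>' \<and> length \<rho>' = length \<rho> + 1} \<subseteq> {\<rho>' \<in> F. prefix \<rho> \<rho>' \<and> length \<rho>' = length \<rho> + 1}"
            using t F_def by blast
        qed
        finally show ?thesis .
      qed
    qed
    show "\<forall>\<rho>\<in>F. length \<rho> = length \<tau> + Suc n \<longrightarrow> accepts Phi e \<rho> S"
    proof (intro ballI impI)
      fix \<rho> assume r: "\<rho> \<in> F" and l: "length \<rho> = length \<tau> + Suc n"
      then have "\<rho> \<noteq> \<tau>" by auto
      then obtain t where t: "t \<in> T'" "\<rho> \<in> Ff t" using r F_def by auto
      have g: "good y Phi e (Ff t) t n S" "length t = length \<tau> + 1" "Sf t = S" using gt t T' by auto
      then show "accepts Phi e \<rho> S" using t l good_D(7)[OF g(1)] by auto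
    qed
  qed
  then show ?case using S B_def by auto
qed


theorem lemma3p4:
  fixes Phi :: oracle_comp and A :: "nat \<Rightarrow> nat set"
    and p e k y m :: nat and \<sigma> :: "nat list"
  assumes finA: "\<forall>j\<le>p. finite (A j)"
    and m_def: "m = (y - 1) * (\<Prod>j\<le>p. card (A j)) + 1"
  shows "(\<exists>S F. is_selection A p S \<and> finite F \<and> is_tree F \<and> y_branching F y \<sigma> k
              \<and> (\<forall>\<tau>. terminal F \<tau> \<longrightarrow> length \<tau> = length \<sigma> + k)
              \<and> tree_accepts Phi e F S)
       \<or> (let X = {\<tau>. \<tau> \<noteq> [] \<and> butlast \<tau> = \<sigma> \<and> (\<exists>i\<le>k. bad Phi A p m e i \<tau>)}
          in finite X \<and> card X < m)"
proof (rule disjCI)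
  define X where "X = {\<tau>. \<tau> \<noteq> [] \<and> butlast \<tau> = \<sigma> \<and> (\<exists>i\<le>k. bad Phi A p m e i \<tau>)}"
  assume "\<not> (let X = {\<tau>. \<tau> \<noteq> [] \<and> butlast \<tau> = \<sigma> \<and> (\<exists>i\<le>k. bad Phi A p m e i \<tau>)}
          in finite X \<and> card X < m)"
  then have nX: "\<not> (finite X \<and> card X < m)" unfolding X_def Let_def by simp
  have "\<exists>T. T \<subseteq> X \<and> finite T \<and> card T = m"
  proof (cases "finite X")
    case True
    then show ?thesis using nX by (metis not_less obtain_subset_with_card_n finite_subset)
  next
    case False
    then show ?thesis by (meson infinite_arbitrarily_large)
  qed
  then obtain T where T: "T \<subseteq> X" "finite T" "card T = m" by blast
  have m1: "m \<ge> 1" using m_def by simp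
  then obtain t0 where "t0 \<in> T" using T by fastforce
  then obtain i0 where "i0 \<le> k" "bad Phi A p m e i0 t0" using T X_def by auto
  then have "k \<ge> 1" by (cases i0) auto
  then obtain k' where k': "k = Suc k'" by (cases k) auto
  have "\<forall>t\<in>T. prefix \<sigma> t \<and> length t = length \<sigma> + 1 \<and> bad Phi A p m e (Suc k') t"
  proof
    fix t assume "t \<in> T"
    then have t: "t \<noteq> []" "butlast t = \<sigma>" "\<exists>i\<le>k. bad Phi A p m e i t" using T X_def by auto
    then have "t = \<sigma> @ [last t]" by (metis append_butlast_last_id)
    then have "prefix \<sigma> t" "length t = length \<sigma> + 1" by (metis prefixI, metis length_append_singleton Suc_eq_plus1)
    moreover obtain i where "i \<le> k" "bad Phi A p m e i t" using t by auto
    then have "bad Phi A p m e k t" using bad_mono[of i k] by (cases i) auto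
    ultimately show "prefix \<sigma> t \<and> length t = length \<sigma> + 1 \<and> bad Phi A p m e (Suc k') t" using k' by simp
  qed
  then have "bad Phi A p m e (Suc k) \<sigma>" using T k' by auto
  define y' where "y' = max y 1"
  have my': "m = (y' - 1) * (\<Prod>j\<le>p. card (A j)) + 1" 
  proof -
    have "y' - 1 = y - 1" unfolding y'_def by simp
    then show ?thesis using m_def by simp
  qed
  obtain S F0 where S: "is_selection A p S" and g: "good y' Phi e F0 \<sigma> k S"
    using core[OF finA my' \<open>bad Phi A p m e (Suc k) \<sigma>\<close>] by blast
  define F where "F = F0 \<union> set (prefixes \<sigma>)"
  have g1: "finite F0" "\<sigma> \<in> F0" "\<forall>\<rho>\<in>F0. prefix \<sigma> \<rho> \<and> length \<rho> \<le> length \<sigma> + k"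
    "\<forall>\<rho> x. x \<in> F0 \<longrightarrow> prefix \<sigma> \<rho> \<longrightarrow> prefix \<rho> x \<longrightarrow> \<rho> \<in> F0"
    "\<forall>\<rho>\<in>F0. length \<rho> < length \<sigma> + k \<longrightarrow> y' \<le> card {\<rho>'\<in>F0. prefix \<rho> \<rho>' \<and> length \<rho>' = length \<rho> + 1}"
    "\<forall>\<rho>\<in>F0. length \<rho> = length \<sigma> + k \<longrightarrow> accepts Phi e \<rho> S"
    using good_D[OF g] by blast+
  have finF: "finite F" using g1(1) F_def by simp
  have inF0: "\<And>\<tau>. \<tau> \<in> F \<Longrightarrow> prefix \<sigma> \<tau> \<Longrightarrow> \<tau> \<in> F0"
    using g1(2) F_def prefix_order.antisym by fastforce
  have termF: "\<And>\<tau>. terminal F \<tau> \<Longrightarrow> \<tau> \<in> F0 \<and> length \<tau> = length \<sigma> + k"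
  proof -
    fix \<tau> assume tt: "terminal F \<tau>"
    then have tF: "\<tau> \<in> F" and ns: "\<not> (\<exists>\<rho>\<in>F. strict_prefix \<tau> \<rho>)" unfolding terminal_def by auto
    have "prefix \<sigma> \<tau>"
    proof (rule ccontr)
      assume "\<not> prefix \<sigma> \<tau>"
      then have "\<tau> \<notin> F0" using g1(3) by blast
      then have "prefix \<tau> \<sigma>" using tF F_def by auto
      then have "strict_prefix \<tau> \<sigma>" using \<open>\<not> prefix \<sigma> \<tau>\<close> by auto
      then show False using ns g1(2) F_def by auto
    qed
    then have t0: "\<tau> \<in> F0" using inF0 tF by blast
    have "\<not> length \<tau> < length \<sigma> + k"
    proof
      assume "length \<tau> < length \<sigma> + k"
      then have "1 \<le> card {\<rho>'\<in>F0. prefix \<tau> \<rho>' \<and> length \<rho>' = length \<tau> + 1}"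
        using g1(5) t0 y'_def by fastforce
      then obtain \<rho> where "\<rho> \<in> F0" "prefix \<tau> \<rho>" "length \<rho> = length \<tau> + 1"
      proof -
        have "{\<rho>' \<in> F0. prefix \<tau> \<rho>' \<and> length \<rho>' = length \<tau> + 1} \<noteq> {}"
          using \<open>1 \<le> card _\<close> by (metis card.empty not_one_le_zero)
        then show ?thesis using that by blast
      qed
      then show False using ns F_def by (metis Suc_eq_plus1 UnI1 lessI prefix_order.le_less less_not_refl)
    qed
    then show "\<tau> \<in> F0 \<and> length \<tau> = length \<sigma> + k" using t0 g1(3) by force
  qed
  have tree: "is_tree F"
    unfolding is_tree_def
  proof (intro conjI ballI allI impI)
    show "F \<noteq> {}" using F_def g1(2) by auto
  next
    fix \<tau> \<rho> assume tF: "\<tau> \<in> F" and pr: "prefix \<rho> \<tau>"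
    show "\<rho> \<in> F"
    proof (cases "\<tau> \<in> F0")
      case True
      then have "prefix \<sigma> \<tau>" using g1(3) by blast
      then have "prefix \<sigma> \<rho> \<or> prefix \<rho> \<sigma>" using pr prefix_same_cases by blast
      then show ?thesis using g1(4) True pr F_def by auto
    next
      case False
      then have "prefix \<tau> \<sigma>" using tF F_def by auto
      then show ?thesis using pr F_def by (auto intro: prefix_order.trans)
    qed
  qed
  have yb: "y_branching F y \<sigma> k"
    unfolding y_branching_def
  proof (intro conjI ballI allI impI)
    show "\<sigma> \<in> F" using g1(2) F_def by auto
  next
    fix \<tau> assume "\<tau> \<in> F" then show "prefix \<tau> \<sigma> \<or> prefix \<sigma> \<tau>" using g1(3) F_def by auto
  next
    fix \<tau> assume "terminal F \<tau>" then show "length \<tau> = length \<sigma> + k" using termF by blast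
  next
    fix \<tau> assume tF: "\<tau> \<in> F" and c: "prefix \<sigma> \<tau> \<and> length \<tau> < length \<sigma> + k"
    then have t0: "\<tau> \<in> F0" using inF0 by blast
    have "y \<le> y'" using y'_def by simp
    also have "y' \<le> card {\<rho>'\<in>F0. prefix \<tau> \<rho>' \<and> length \<rho>' = length \<tau> + 1}" using g1(5) t0 c by blast
    also have "\<dots> \<le> card {\<rho>\<in>F. prefix \<tau> \<rho> \<and> length \<rho> = length \<tau> + 1}"
    proof (rule card_mono)
      show "finite {\<rho>\<in>F. prefix \<tau> \<rho> \<and> length \<rho> = length \<tau> + 1}" using finF by simp
      show "{\<rho>'\<in>F0. prefix \<tau> \<rho>' \<and> length \<rho>' = length \<tau> + 1} \<subseteq> {\<rho>\<in>F. prefix \<tau> \<rho> \<and> length \<rho> = length \<tau> + 1}"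
        using F_def by blast
    qed
    finally show "y \<le> card {\<rho>\<in>F. prefix \<tau> \<rho> \<and> length \<rho> = length \<tau> + 1}" .
  qed
  have ta: "tree_accepts Phi e F S" unfolding tree_accepts_def using termF g1(6) by blast
  show "\<exists>S F. is_selection A p S \<and> finite F \<and> is_tree F \<and> y_branching F y \<sigma> k
              \<and> (\<forall>\<tau>. terminal F \<tau> \<longrightarrow> length \<tau> = length \<sigma> + k)
              \<and> tree_accepts Phi e F S"
    using S finF tree yb termF ta by blast
qed

end
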